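(* Let $c>0$, $f_s>0$, let $M,N,K\ge1$ be integers, $T_{\max}=(N-1)/f_s$, and $\bm{r}^{\mathrm{mic}}_1,\dots,\bm{r}^{\mathrm{mic}}_M\in\mathbb{R}^3$ with $E_M=\{\bm{r}^{\mathrm{mic}}_m\}$. Let $\kappa=\kappa^{\mathrm{lp}}$ where $\kappa^{\mathrm{lp}}(t)=\operatorname{sinc}(\pi f_s t)$, with $\operatorname{sinc}(u)=\sin(u)/u$ for $u\ne0$ and $\operatorname{sinc}(0)=1$. Then $\Gamma^K$ is amplitude lower-bounded, i.e. there is $C>0$ with $\|\Gamma^K(\bm{a},\bm{r})\|_2\ge C\sum_{k=1}^K a_k$ for all $(\bm{a},\bm{r})\in\mathbb{R}_+^K\times\mathscr{C}^K$.
   Context: $\mathbb{R}_+=[0,+\infty)$, $\|\cdot\|_2$ is the Euclidean norm. For $\bm{r}\in\mathbb{R}^3\setminus E_M$, $\gamma(\bm{r})\in\mathbb{R}^{MN}$ has components $\gamma_{m,n}(\bm{r})=\dfrac{\kappa\big(n/f_s-\|\bm{r}-\bm{r}^{\mathrm{mic}}_m\|_2/c\big)}{4\pi\|\bm{r}-\bm{r}^{\mathrm{mic}}_m\|_2}$, $1\le m\le M$, $0\le n\le N-1$. $\mathscr{C}=\bigcap_{m=1}^M\overline{B(\bm{r}^{\mathrm{mic}}_m,cT_{\max})}\setminus E_M$. $\Gamma^K(\bm{a},\bm{r})=\sum_{k=1}^K a_k\gamma(\bm{r}_k)$. *)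

theory Defs
  imports "HOL-Analysis.Analysis"
begin

definition sinc :: "real \<Rightarrow> real" where
  "sinc u = (if u = 0 then 1 else sin u / u)"

definition kappa_lp :: "real \<Rightarrow> real \<Rightarrow> real" where
  "kappa_lp fs t = sinc (pi * fs * t)"

definition gamma_comp ::
  "real \<Rightarrow> real \<Rightarrow> (real \<Rightarrow> real) \<Rightarrow> (nat \<Rightarrow> real^3) \<Rightarrow> real^3 \<Rightarrow> nat \<times> nat \<Rightarrow> real" where
  "gamma_comp c fs kappa rmic r mn =
     (let m = fst mn; n = snd mn; d = norm (r - rmic m) in
      kappa (real n / fs - d / c) / (4 * pi * d))"

definition Gamma_K ::
  "real \<Rightarrow> real \<Rightarrow> (real \<Rightarrow> real) \<Rightarrow> (nat \<Rightarrow> real^3) \<Rightarrow> nat \<Rightarrow>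
   (nat \<Rightarrow> real) \<Rightarrow> (nat \<Rightarrow> real^3) \<Rightarrow> nat \<times> nat \<Rightarrow> real" where
  "Gamma_K c fs kappa rmic K a r mn = (\<Sum>k\<in>{1..K}. a k * gamma_comp c fs kappa rmic (r k) mn)"

text \<open>Index set of R^{MN}.\<close>
definition idx :: "nat \<Rightarrow> nat \<Rightarrow> (nat \<times> nat) set" where
  "idx M N = {1..M} \<times> {0..<N}"

definition E_mics :: "nat \<Rightarrow> (nat \<Rightarrow> real^3) \<Rightarrow> (real^3) set" where
  "E_mics M rmic = rmic ` {1..M}"

definition T_max :: "real \<Rightarrow> nat \<Rightarrow> real" where
  "T_max fs N = (real N - 1) / fs"

definition calC :: "real \<Rightarrow> real \<Rightarrow> nat \<Rightarrow> nat \<Rightarrow> (nat \<Rightarrow> real^3) \<Rightarrow> (real^3) set" where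
  "calC c fs M N rmic =
     (\<Inter>m\<in>{1..M}. cball (rmic m) (c * T_max fs N)) - E_mics M rmic"

end

theory Submission
  imports Defs
begin

lemma sinc_cont: "isCont sinc x"
proof (cases "x = 0")
  case True
  have e: "sinc = (\<lambda>z. if z = 0 then 1 else sin z / z)" by (rule ext) (simp only: sinc_def)
  have "isCont (\<lambda>z. if z = 0 then 1 else sin z / z) (0::real)"
    by (rule DERIV_isCont[OF has_field_derivative_sin_z_over_z[of UNIV]])
  then show ?thesis using True e by simp
next
  case False
  have lim: "((\<lambda>y. sin y / y) \<longlongrightarrow> sin x / x) (at x)"
    using False by (intro tendsto_intros) auto
  have nh: "\<forall>\<^sub>F y in nhds x. y \<noteq> 0" using False
    by (intro t1_space_nhds) auto
  have ev: "\<forall>\<^sub>F y in at x. sin y / y = sinc y"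
    unfolding eventually_at_filter by (rule eventually_mono[OF nh]) (simp add: sinc_def)
  have "(sinc \<longlongrightarrow> sin x / x) (at x)" using lim tendsto_cong[OF ev] by simp
  then show ?thesis using False by (simp add: isCont_def sinc_def)
qed

lemma sin_pi_int: "sin (pi * real_of_int k) = 0"
  using sin_zero_iff_int2[of "pi * real_of_int k"] by (metis mult.commute)

lemma sinc_int: "sinc (pi * real_of_int k) = (if k = 0 then 1 else 0)"
  by (simp add: sinc_def sin_pi_int)

lemma pf:
  fixes x :: real
  assumes "\<And>n. n \<le> L \<Longrightarrow> x + real n \<noteq> 0"
  shows "(\<Sum>n=0..L. (-1)^n * real (L choose n) / (x + real n)) = fact L / (\<Prod>n=0..L. (x + real n))"
  using assms
proof (induction L arbitrary: x)
  case 0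
  then show ?case by simp
next
  case (Suc L)
  define S where "S = (\<lambda>y. (\<Sum>n=0..L. (-1)^n * real (L choose n) / (y + real n)))"
  define P where "P = (\<lambda>y. (\<Prod>n=0..L. (y + real n)))"
  have x0: "x \<noteq> 0" using Suc.prems[of 0] by simp
  have IH0: "S x = fact L / P x" unfolding S_def P_def using Suc.prems by (intro Suc.IH) auto
  have IH1: "S (x+1) = fact L / P (x+1)" unfolding S_def P_def using Suc.prems[of "Suc _"]
    by (intro Suc.IH) (auto simp: add.assoc)
  have P1: "P (x+1) * x = (\<Prod>n=0..Suc L. (x + real n))"
    unfolding P_def by (subst prod.atLeast0_atMost_Suc_shift) (simp add: add.assoc mult.commute)
  have P2: "P x * (x + real (Suc L)) = (\<Prod>n=0..Suc L. (x + real n))"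
    unfolding P_def by simp
  have "(\<Sum>n=0..Suc L. (-1)^n * real (Suc L choose n) / (x + real n))
     = 1/x + (\<Sum>i=0..L. (-1)^(Suc i) * (real (L choose i) + real (L choose Suc i)) / (x + real (Suc i)))"
    by (subst sum.atLeast0_atMost_Suc_shift) simp
  also have "\<dots> = 1/x - S (x+1) - (\<Sum>i=0..L. (-1)^i * real (L choose Suc i) / (x + real (Suc i)))"
  proof -
    have "(\<Sum>i=0..L. (-1)^(Suc i) * (real (L choose i) + real (L choose Suc i)) / (x + real (Suc i)))
      = (\<Sum>i=0..L. - ((-1)^i * real (L choose i) / ((x+1) + real i)) - ((-1)^i * real (L choose Suc i) / (x + real (Suc i))))"
    proof (intro sum.cong refl)
      fix i assume "i \<in> {0..L}"
      have d: "(x+1) + real i = x + real (Suc i)" by simp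
      show "(-1)^(Suc i) * (real (L choose i) + real (L choose Suc i)) / (x + real (Suc i))
        = - ((-1)^i * real (L choose i) / ((x+1) + real i)) - ((-1)^i * real (L choose Suc i) / (x + real (Suc i)))"
        unfolding d by (simp add: distrib_left, simp only: diff_divide_distrib minus_divide_left)
    qed
    also have "\<dots> = - S (x+1) - (\<Sum>i=0..L. (-1)^i * real (L choose Suc i) / (x + real (Suc i)))"
      unfolding S_def by (simp only: sum_subtractf sum_negf)
    finally show ?thesis by simp
  qed
  also have "1/x - (\<Sum>i=0..L. (-1)^i * real (L choose Suc i) / (x + real (Suc i))) = S x"
  proof -
    have "S x = (\<Sum>n=0..Suc L. (-1)^n * real (L choose n) / (x + real n))"
      unfolding S_def by simp
    also have "\<dots> = 1/x + (\<Sum>i=0..L. (-1)^Suc i * real (L choose Suc i) / (x + real (Suc i)))"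
      by (subst sum.atLeast0_atMost_Suc_shift) simp
    finally show ?thesis by (simp add: sum_negf[symmetric])
  qed
  then have "1/x - S (x+1) - (\<Sum>i=0..L. (-1)^i * real (L choose Suc i) / (x + real (Suc i))) = S x - S (x+1)"
    by linarith
  also have "\<dots> = fact L / P x - fact L / P (x+1)" using IH0 IH1 by simp
  also have "\<dots> = fact (Suc L) / (\<Prod>n=0..Suc L. (x + real n))"
  proof -
    have Q: "(\<Prod>n=0..Suc L. (x + real n)) \<noteq> 0"
      by (metis (no_types, lifting) Suc.prems atLeastAtMost_iff finite_atLeastAtMost prod_zero_iff)
    have "P x \<noteq> 0" "P (x+1) \<noteq> 0" using Q P1 P2 by auto
    have "x + real (Suc L) \<noteq> 0" using Suc.prems[of "Suc L"] by simp
    define Q where "Q = (\<Prod>n=0..Suc L. (x + real n))"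
    have a: "fact L / P x = fact L * (x + real (Suc L)) / Q"
      unfolding Q_def P2[symmetric] using \<open>x + real (Suc L) \<noteq> 0\<close> by simp
    have b: "fact L / P (x+1) = fact L * x / Q"
      unfolding Q_def P1[symmetric] using x0 by simp
    have num: "fact L * (x + real (Suc L)) - fact L * x = (fact (Suc L) :: real)"
      by (simp add: algebra_simps)
    have "fact L / P x - fact L / P (x+1) = fact L * (x + real (Suc L)) / Q - fact L * x / Q"
      by (simp only: a b)
    also have "\<dots> = fact (Suc L) / Q" by (simp only: diff_divide_distrib[symmetric] num)
    finally show ?thesis unfolding Q_def .
  qed
  finally show ?case .
qed


lemma sinc_cont'[continuous_intros]: "isCont f x \<Longrightarrow> isCont (\<lambda>y. sinc (f y)) x"
  by (rule isCont_o2[OF _ sinc_cont])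

definition FF :: "nat \<Rightarrow> real \<Rightarrow> real" where
  "FF L t = (\<Sum>n=0..L. real (L choose n) * sinc (pi * (real n - t)))"

lemma FF_cont: "continuous_on S (FF L)"
  unfolding FF_def by (intro continuous_at_imp_continuous_on ballI continuous_intros)

lemma FF_int: assumes "j \<le> L" shows "FF L (real j) = real (L choose j)"
proof -
  have "\<And>n. real (L choose n) * sinc (pi * (real n - real j)) = (if n = j then real (L choose n) else 0)"
  proof -
    fix n
    have "real n - real j = real_of_int (int n - int j)" by simp
    then show "real (L choose n) * sinc (pi * (real n - real j)) = (if n = j then real (L choose n) else 0)"
      using sinc_int[of "int n - int j"] by auto
  qed
  then show ?thesis unfolding FF_def using assms by (simp add: sum.delta')
qed

lemma FF_nonint:
  assumes "\<And>n. n \<le> L \<Longrightarrow> t \<noteq> real n"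
  shows "FF L t = - (sin (pi * t) / pi) * (fact L / (\<Prod>n=0..L. (- t + real n)))"
proof -
  have "\<And>n. n \<in> {0..L} \<Longrightarrow> real (L choose n) * sinc (pi * (real n - t))
      = - (sin (pi * t) / pi) * ((-1)^n * real (L choose n) / (- t + real n))"
  proof -
    fix n assume "n \<in> {0..L}"
    then have ne: "real n - t \<noteq> 0" using assms[of n] by auto
    have s: "sin (pi * (real n - t)) = - ((-1)^n * sin (pi * t))"
      by (simp add: right_diff_distrib sin_diff)
    show "real (L choose n) * sinc (pi * (real n - t))
      = - (sin (pi * t) / pi) * ((-1)^n * real (L choose n) / (- t + real n))"
      using ne unfolding sinc_def s by (simp add: divide_simps)
  qed
  then have "FF L t = (\<Sum>n=0..L. - (sin (pi * t) / pi) * ((-1)^n * real (L choose n) / (- t + real n)))"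
    unfolding FF_def by (rule sum.cong[OF refl])
  also have "\<dots> = - (sin (pi * t) / pi) * (\<Sum>n=0..L. (-1)^n * real (L choose n) / (- t + real n))"
    by (simp add: sum_distrib_left)
  also have "\<dots> = - (sin (pi * t) / pi) * (fact L / (\<Prod>n=0..L. (- t + real n)))"
    using assms by (subst pf) auto
  finally show ?thesis .
qed

lemma FF_ne0: assumes "0 \<le> t" "t \<le> real L" shows "FF L t \<noteq> 0"
proof (cases "\<exists>j\<le>L. t = real j")
  case True
  then obtain j where "j \<le> L" "t = real j" by auto
  then show ?thesis using FF_int by simp
next
  case False
  then have nt: "\<And>n. n \<le> L \<Longrightarrow> t \<noteq> real n" by blast
  have "sin (pi * t) \<noteq> 0"
  proof
    assume "sin (pi * t) = 0"
    then obtain i :: int where "pi * t = of_int i * pi" by (auto simp: sin_zero_iff_int2)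
    then have ti: "t = of_int i" by simp
    then have "0 \<le> i" using assms by simp
    then have "t = real (nat i)" using ti by simp
    moreover have "nat i \<le> L" using assms \<open>t = real (nat i)\<close> by linarith
    ultimately show False using nt by blast
  qed
  moreover have "(\<Prod>n=0..L. (- t + real n)) \<noteq> 0"
  proof
    assume "(\<Prod>n=0..L. (- t + real n)) = 0"
    then obtain n where "n \<le> L" "- t + real n = 0" by (auto simp: prod_zero_iff)
    then show False using nt[of n] by simp
  qed
  ultimately show ?thesis using FF_nonint[OF nt] by simp
qed

lemma FF_pos: assumes "0 \<le> t" "t \<le> real L" shows "FF L t > 0"
proof (rule ccontr)
  assume "\<not> FF L t > 0"
  then have "FF L t \<le> 0" by simp
  moreover have "0 \<le> FF L 0" using FF_int[of 0 L] by simp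
  ultimately obtain x where "0 \<le> x" "x \<le> t" "FF L x = 0"
    using IVT2'[of "FF L" t 0 0] assms FF_cont by auto
  then show False using FF_ne0[of x L] assms by simp
qed

lemma FF_min: "\<exists>\<delta>>0. \<forall>t\<in>{0..real L}. FF L t \<ge> \<delta>"
proof -
  obtain t0 where "t0 \<in> {0..real L}" "\<forall>y\<in>{0..real L}. FF L t0 \<le> FF L y"
    using continuous_attains_inf[of "{0..real L}" "FF L"] FF_cont by auto
  then show ?thesis using FF_pos[of t0 L] by auto
qed

theorem corollary1:
  fixes c fs :: real and M N K :: nat and rmic :: "nat \<Rightarrow> real^3"
  assumes "c > 0" and "fs > 0" and "M \<ge> 1" and "N \<ge> 1" and "K \<ge> 1"
  shows "\<exists>C>0. \<forall>(a :: nat \<Rightarrow> real) (r :: nat \<Rightarrow> real^3).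
           (\<forall>k\<in>{1..K}. a k \<ge> 0 \<and> r k \<in> calC c fs M N rmic) \<longrightarrow>
           L2_set (Gamma_K c fs (kappa_lp fs) rmic K a r) (idx M N) \<ge> C * (\<Sum>k\<in>{1..K}. a k)"
proof -
  have cpos: "c > 0" and fpos: "fs > 0" and M1: "M \<ge> 1" and N1: "N \<ge> 1" using assms by auto
  define L where "L = N - 1"
  have NL: "N = Suc L" using N1 unfolding L_def by simp
  have TL: "T_max fs N = real L / fs" unfolding T_max_def NL by simp
  obtain \<delta> where dpos: "\<delta> > 0" and dF: "\<And>t. t \<in> {0..real L} \<Longrightarrow> FF L t \<ge> \<delta>"
    using FF_min[of L] by auto
  define D where "D = c * T_max fs N + 1"
  have "0 \<le> c * (real L / fs)" using cpos fpos by simp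
  then have Dpos: "D > 0" unfolding D_def TL by linarith
  define w :: "nat \<times> nat \<Rightarrow> real" where "w = (\<lambda>(m,n). if m = 1 then real (L choose n) else 0)"
  define W where "W = L2_set w (idx M N)"
  have fin: "finite (idx M N)" unfolding idx_def by simp
  have "w (1,0) \<le> W" unfolding W_def
    by (rule member_le_L2_set[OF fin]) (use M1 N1 in \<open>auto simp: idx_def\<close>)
  then have Wpos: "W > 0" unfolding w_def by simp
  define e where "e = \<delta> / (4 * pi * D)"
  have epos: "e > 0" unfolding e_def using dpos Dpos by simp
  have key: "(\<Sum>n\<in>{0..<N}. real (L choose n) * gamma_comp c fs (kappa_lp fs) rmic p (1, n)) \<ge> e"
    if p: "p \<in> calC c fs M N rmic" for p
  proof -
    define d where "d = norm (p - rmic 1)"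
    have "rmic 1 \<in> E_mics M rmic" unfolding E_mics_def using M1 by auto
    then have "p \<noteq> rmic 1" using p unfolding calC_def by auto
    then have dp: "d > 0" unfolding d_def by simp
    have "p \<in> cball (rmic 1) (c * T_max fs N)" using p M1 unfolding calC_def by auto
    then have dle: "d \<le> c * T_max fs N" unfolding d_def by (simp add: dist_norm norm_minus_commute)
    define t where "t = fs * d / c"
    have t0: "0 \<le> t" unfolding t_def using dp cpos fpos by simp
    have "t \<le> fs * (c * T_max fs N) / c" unfolding t_def using dle cpos fpos
      by (intro divide_right_mono mult_left_mono) auto
    also have "\<dots> = real L" unfolding TL using cpos fpos by simp
    finally have tL: "t \<le> real L" .
    have g: "gamma_comp c fs (kappa_lp fs) rmic p (1, n) = sinc (pi * (real n - t)) / (4 * pi * d)" for n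
    proof -
      have arg: "pi * fs * (real n / fs - d / c) = pi * (real n - t)"
        unfolding t_def using cpos fpos by (simp add: right_diff_distrib)
      show ?thesis unfolding gamma_comp_def kappa_lp_def Let_def fst_conv snd_conv d_def[symmetric]
        by (simp only: arg)
    qed
    have "(\<Sum>n\<in>{0..<N}. real (L choose n) * gamma_comp c fs (kappa_lp fs) rmic p (1, n))
        = FF L t / (4 * pi * d)"
      unfolding g FF_def NL atLeastLessThanSuc_atLeastAtMost sum_divide_distrib
      by (intro sum.cong refl) (simp only: times_divide_eq_right)
    also have "\<dots> \<ge> \<delta> / (4 * pi * D)"
    proof (rule frac_le)
      show "0 \<le> FF L t" using dF[of t] t0 tL dpos by simp
      show "\<delta> \<le> FF L t" using dF[of t] t0 tL by simp
      show "0 < 4 * pi * d" using dp by simp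
      show "4 * pi * d \<le> 4 * pi * D" using dle unfolding D_def by simp
    qed
    finally show ?thesis unfolding e_def .
  qed
  show ?thesis
  proof (intro exI[of _ "e / W"] conjI allI impI)
    show "e / W > 0" using epos Wpos by simp
    fix a :: "nat \<Rightarrow> real" and r :: "nat \<Rightarrow> real^3"
    assume H: "\<forall>k\<in>{1..K}. a k \<ge> 0 \<and> r k \<in> calC c fs M N rmic"
    define G where "G = Gamma_K c fs (kappa_lp fs) rmic K a r"
    have "(\<Sum>i\<in>idx M N. w i * G i) = (\<Sum>m\<in>{1..M}. \<Sum>n\<in>{0..<N}. w (m,n) * G (m,n))"
      unfolding idx_def by (simp add: sum.cartesian_product)
    also have "\<dots> = (\<Sum>m\<in>{1..M}. if m = 1 then (\<Sum>n\<in>{0..<N}. real (L choose n) * G (1,n)) else 0)"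
      unfolding w_def by (intro sum.cong refl) auto
    also have "\<dots> = (\<Sum>n\<in>{0..<N}. real (L choose n) * G (1,n))"
      using M1 by (simp add: sum.delta')
    also have "\<dots> = (\<Sum>k\<in>{1..K}. a k * (\<Sum>n\<in>{0..<N}. real (L choose n) * gamma_comp c fs (kappa_lp fs) rmic (r k) (1, n)))"
      unfolding G_def Gamma_K_def
      unfolding sum_distrib_left by (subst sum.swap) (simp add: mult_ac)
    also have "\<dots> \<ge> (\<Sum>k\<in>{1..K}. a k * e)"
      using H key by (intro sum_mono mult_left_mono) auto
    finally have lo: "e * (\<Sum>k\<in>{1..K}. a k) \<le> (\<Sum>i\<in>idx M N. w i * G i)"
      by (simp add: sum_distrib_left mult.commute)
    have "(\<Sum>i\<in>idx M N. w i * G i) \<le> (\<Sum>i\<in>idx M N. \<bar>w i\<bar> * \<bar>G i\<bar>)"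
      by (intro sum_mono) (metis abs_ge_self abs_mult)
    also have "\<dots> \<le> W * L2_set G (idx M N)" unfolding W_def by (rule L2_set_mult_ineq)
    finally have "e * (\<Sum>k\<in>{1..K}. a k) \<le> W * L2_set G (idx M N)" using lo by linarith
    then show "e / W * (\<Sum>k\<in>{1..K}. a k) \<le> L2_set (Gamma_K c fs (kappa_lp fs) rmic K a r) (idx M N)"
      using Wpos unfolding G_def by (simp add: pos_divide_le_eq mult.commute)
  qed
qed

end
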